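(* Let $p=(p_1,\dots,p_n)$ be a sequence of positive integers, let $k=\min_i p_i$, and let $A,B\subseteq S_p$ be a cross-intersecting pair of families. Then $|A|\cdot|B|\le |S_p|^2/k^2$. Equality holds for $A=B=\{x\in S_p : x_i=j\}$ whenever $i\in[n]$ satisfies $p_i=k$ and $j\in[k]$. If $k\neq 2$, these are the only cross-intersecting pairs $(A,B)$ attaining equality.
   Context: For a positive integer $m$, $[m]=\{1,\dots,m\}$. For a sequence of positive integers $p=(p_1,\dots,p_n)$, $S_p=[p_1]\times\cdots\times[p_n]$; its elements are called vectors. Two vectors $x,y\in S_p$ are $r$-intersecting if $|\{i\in[n]: x_i=y_i\}|\ge r$. Two families $A,B\subseteq S_p$ are $r$-cross-intersecting if every $x\in A$ and $y\in B$ are $r$-intersecting; "cross-intersecting" means $1$-cross-intersecting. *)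

theory Defs
  imports Complex_Main "HOL-Library.FuncSet"
begin

definition Sp :: "nat \<Rightarrow> (nat \<Rightarrow> nat) \<Rightarrow> (nat \<Rightarrow> nat) set" where
  "Sp n p = PiE {1..n} (\<lambda>i. {1..p i})"

definition r_intersecting :: "nat \<Rightarrow> nat \<Rightarrow> (nat \<Rightarrow> nat) \<Rightarrow> (nat \<Rightarrow> nat) \<Rightarrow> bool" where
  "r_intersecting n r x y \<longleftrightarrow> card {i \<in> {1..n}. x i = y i} \<ge> r"

definition r_cross_intersecting ::
  "nat \<Rightarrow> nat \<Rightarrow> (nat \<Rightarrow> nat) set \<Rightarrow> (nat \<Rightarrow> nat) set \<Rightarrow> bool" where
  "r_cross_intersecting n r A B \<longleftrightarrow> (\<forall>x\<in>A. \<forall>y\<in>B. r_intersecting n r x y)"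

abbreviation cross_intersecting where
  "cross_intersecting n A B \<equiv> r_cross_intersecting n 1 A B"

end

theory Submission
  imports Defs
begin

definition F :: "real \<Rightarrow> real \<Rightarrow> real \<Rightarrow> real" where "F c x y = (1-x)*(1-y) - c*x*y"

lemma F_x: "F c x y - F c x' y = (x' - x) * (1 + (c-1)*y)"
  unfolding F_def by (simp add: algebra_simps)
lemma F_y: "F c x y - F c x y' = (y' - y) * (1 + (c-1)*x)"
  unfolding F_def by (simp add: algebra_simps)
lemma D_pos: fixes c y :: real shows "c \<ge> 1 \<Longrightarrow> 0 \<le> y \<Longrightarrow> 1 + (c-1)*y \<ge> 1"
  using mult_nonneg_nonneg[of "c-1" y] by simp
lemma D_le: fixes c y :: real shows "c \<ge> 1 \<Longrightarrow> y \<le> 1 \<Longrightarrow> 1 + (c-1)*y \<le> c"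
  using mult_left_mono[of y 1 "c-1"] by simp

lemma F_mono_x: "c \<ge> 1 \<Longrightarrow> 0 \<le> y \<Longrightarrow> x \<le> x' \<Longrightarrow> F c x' y \<le> F c x y"
  using F_x[of c x y x'] D_pos[of c y] by (smt (verit) mult_nonneg_nonneg)
lemma F_mono_y: "c \<ge> 1 \<Longrightarrow> 0 \<le> x \<Longrightarrow> y \<le> y' \<Longrightarrow> F c x y' \<le> F c x y"
  using F_y[of c x y y'] D_pos[of c x] by (smt (verit) mult_nonneg_nonneg)

lemma core_m:
  fixes s t u v m :: real
  defines "c \<equiv> m*m"
  assumes m: "m \<ge> 1" and st: "0\<le>s" "s\<le>1" "0\<le>t" "t\<le>1" and uv: "0\<le>u" "u\<le>1" "0\<le>v" "v\<le>1"
    and Fsv: "F c s v \<ge> 0" and Fut: "F c u t \<ge> 0" and neg: "F c s t < 0"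
  shows "F c s t + m*(F c s v + F c u t) + m^2 * F c u v \<ge> 0"
    and "m \<ge> 2 \<Longrightarrow> F c s t + m*(F c s v + F c u t) + m^2 * F c u v = 0 \<Longrightarrow> s = 1 \<and> t=1 \<and> u=0 \<and> v=0"
proof -
  have c1: "c \<ge> 1" unfolding c_def using m by (metis mult_mono' mult_1 order_trans zero_le_one)
  define Dt where "Dt = 1 + (c-1)*t"
  define Ds where "Ds = 1 + (c-1)*s"
  have Dt1: "Dt \<ge> 1" "Dt \<le> c" unfolding Dt_def using c1 st D_le[of c t] by auto
  have Ds1: "Ds \<ge> 1" "Ds \<le> c" unfolding Ds_def using c1 st D_le[of c s] by auto
  define u0 where "u0 = (1-t)/Dt"
  define v0 where "v0 = (1-s)/Ds"
  have Fut': "F c u t = (u0 - u)*Dt" unfolding u0_def F_def Dt_def using Dt1 Dt_def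
    by (simp add: field_simps) 
  have Fsv': "F c s v = (v0 - v)*Ds" unfolding v0_def F_def Ds_def using Ds1 Ds_def
    by (simp add: field_simps) 
  have "(u0-u)*Dt \<ge> 0" using Fut Fut' by simp
  hence uu0: "u \<le> u0" using Dt1 by (simp add: zero_le_mult_iff)
  have "(v0-v)*Ds \<ge> 0" using Fsv Fsv' by simp
  hence vv0: "v \<le> v0" using Ds1 by (simp add: zero_le_mult_iff)
  have u0r: "0 \<le> u0" "u0 \<le> 1" unfolding u0_def using Dt1 st c1 Dt_def
    by (auto simp: field_simps)
  have v0r: "0 \<le> v0" "v0 \<le> 1" unfolding v0_def using Ds1 st c1 Ds_def
    by (auto simp: field_simps)
  have e1: "u0*Dt = 1-t" "(1-u0)*Dt = c*t" unfolding u0_def using Dt1 by (auto simp: field_simps Dt_def)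
  have e2: "v0*Ds = 1-s" "(1-v0)*Ds = c*s" unfolding v0_def using Ds1 by (auto simp: field_simps Ds_def)
  have "F c u0 v0 * (Ds*Dt) = ((1-u0)*Dt)*((1-v0)*Ds) - c*(u0*Dt)*(v0*Ds)"
    unfolding F_def by (simp add: algebra_simps)
  also have "\<dots> = - c * F c s t" unfolding e1 e2 F_def by (simp add: algebra_simps)
  finally have key: "F c u0 v0 = - c * F c s t / (Ds*Dt)" using Ds1 Dt1 by (simp add: field_simps)
  have Fuv: "F c u v \<ge> F c u0 v0"
    using F_mono_x[OF c1 uv(3) uu0] F_mono_y[OF c1 u0r(1) vv0] by linarith
  have m2: "m^2 = c" unfolding c_def by (simp add: power2_eq_square)
  have "F c s t + m^2 * F c u0 v0 = F c s t * (1 - c*c/(Ds*Dt))"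
    unfolding m2 key using Ds1 Dt1 by (simp add: field_simps)
  moreover have "c*c/(Ds*Dt) \<ge> 1" using Ds1 Dt1 c1
    by (simp add: field_simps mult_mono)
  ultimately have base: "F c s t + m^2 * F c u0 v0 \<ge> 0" using neg
    by (simp add: mult_nonpos_nonpos)
  have mp: "m > 0" using m by simp
  have A: "m*(F c s v + F c u t) \<ge> 0" using Fsv Fut mp by simp
  have B: "m^2 * F c u v \<ge> m^2 * F c u0 v0" using Fuv by (simp add: mult_left_mono)
  show "F c s t + m*(F c s v + F c u t) + m^2 * F c u v \<ge> 0" using A B base by linarith
  assume m2': "m \<ge> 2" and eq: "F c s t + m*(F c s v + F c u t) + m^2 * F c u v = 0"
  have z1: "m*(F c s v + F c u t) = 0" and z3: "F c s t + m^2 * F c u0 v0 = 0"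
    using A B base eq by linarith+
  have "F c s v = 0" "F c u t = 0" using z1 mp Fsv Fut
    by (smt (verit) mult_pos_pos)+
  hence "u = u0" "v = v0" using Fut' Fsv' Dt1 Ds1 by auto
  have "c > 1" unfolding c_def using mult_mono[of 2 m 2 m] m2' by simp
  have "c*c/(Ds*Dt) = 1"
  proof -
    have "F c s t * (1 - c*c/(Ds*Dt)) = 0" using z3 \<open>F c s t + m^2 * F c u0 v0 = F c s t * (1 - c*c/(Ds*Dt))\<close> by simp
    thus ?thesis using neg c1 Ds1 Dt1 by (simp add: field_simps)
  qed
  hence "c*c = Ds*Dt" using Ds1 Dt1 by (simp add: field_simps)
  hence "Ds = c \<and> Dt = c"
  proof -
    assume h: "c*c = Ds*Dt"
    have "Ds*Dt \<le> c*Dt" "c*Dt \<le> c*c" using Ds1 Dt1 c1 by (simp_all add: mult_right_mono mult_left_mono)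
    hence "Ds*Dt = c*Dt" "c*Dt = c*c" using h by linarith+
    thus ?thesis using Dt1 c1 by simp
  qed
  hence "(c-1)*s = (c-1)*1" "(c-1)*t = (c-1)*1" unfolding Ds_def Dt_def by (simp_all add: diff_eq_eq eq_diff_eq)
  hence "s = 1" "t = 1" using \<open>c > 1\<close> mult_cancel_left[of "c-1" s 1] mult_cancel_left[of "c-1" t 1] by auto
  thus "s = 1 \<and> t=1 \<and> u=0 \<and> v=0" using \<open>u = u0\<close> \<open>v = v0\<close> unfolding u0_def v0_def by simp
qed
lemma core:
  fixes s t u v m r :: real
  defines "c \<equiv> m*m"
  assumes m: "m \<ge> 1" and r: "r \<ge> m" and st: "0\<le>s" "s\<le>1" "0\<le>t" "t\<le>1" and uv: "0\<le>u" "u\<le>1" "0\<le>v" "v\<le>1"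
    and us: "u \<le> s" and Fsv: "F c s v \<ge> 0" and Fut: "F c u t \<ge> 0"
  shows "F c s t + r*(F c s v + F c u t) + r^2 * F c u v \<ge> 0"
    and "m \<ge> 2 \<Longrightarrow> v < t \<Longrightarrow> F c s t + r*(F c s v + F c u t) + r^2 * F c u v = 0 \<Longrightarrow> s = 1 \<and> t=1 \<and> u=0 \<and> v=0 \<and> r = m"
proof -
  have c1: "c \<ge> 1" unfolding c_def using m by (metis mult_mono' mult_1 order_trans zero_le_one)
  have Fuv: "F c u v \<ge> 0" using F_mono_x[OF c1 uv(3) us] Fsv by linarith
  have rp: "r > 0" using m r by simp
  have sq: "r^2 \<ge> m^2" using r m by (simp add: power_mono)
  have diff: "(F c s t + r*(F c s v + F c u t) + r^2 * F c u v) - (F c s t + m*(F c s v + F c u t) + m^2 * F c u v)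
     = (r-m)*(F c s v + F c u t) + (r^2-m^2)* F c u v" by (simp add: algebra_simps)
  have dnn: "(r-m)*(F c s v + F c u t) + (r^2-m^2)* F c u v \<ge> 0"
    using r sq Fsv Fut Fuv by (simp add: mult_nonneg_nonneg)
  show P: "F c s t + r*(F c s v + F c u t) + r^2 * F c u v \<ge> 0"
  proof (cases "F c s t < 0")
    case True
    from core_m(1)[OF m st uv, folded c_def, OF Fsv Fut True] diff dnn show ?thesis by linarith
  next
    case False
    then show ?thesis using rp Fsv Fut Fuv by (simp add: mult_nonneg_nonneg)
  qed
  assume m2: "m \<ge> 2" and vt: "v < t" and eq: "F c s t + r*(F c s v + F c u t) + r^2 * F c u v = 0"
  show "s = 1 \<and> t=1 \<and> u=0 \<and> v=0 \<and> r = m"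
  proof (cases "F c s t < 0")
    case True
    have Pm: "F c s t + m*(F c s v + F c u t) + m^2 * F c u v \<ge> 0"
      using core_m(1)[OF m st uv, folded c_def, OF Fsv Fut True] .
    hence Pm0: "F c s t + m*(F c s v + F c u t) + m^2 * F c u v = 0" using diff dnn eq by linarith
    from core_m(2)[OF m st uv, folded c_def, OF Fsv Fut True m2 this]
    have h: "s = 1 \<and> t=1 \<and> u=0 \<and> v=0" .
    hence "F c u v = 1" by (simp add: F_def)
    moreover have t1: "(r-m)*(F c s v + F c u t) \<ge> 0" using r Fsv Fut by simp
    moreover have "(r-m)*(F c s v + F c u t) + (r^2-m^2)*F c u v = 0" using diff eq Pm0 by linarith
    ultimately have "(r^2-m^2) \<le> 0" by simp
    hence "r^2 \<le> m^2" by simp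
    hence "r \<le> m" using m power2_le_imp_le by fastforce
    thus ?thesis using h r by simp
  next
    case False
    have "1 + (c-1)*s \<ge> 1" using D_pos[OF c1 st(1)] .
    hence "F c s v - F c s t > 0" using F_y[of c s v t] vt by simp
    hence "F c s v > 0" using False by linarith
    hence "r*(F c s v + F c u t) > 0" using rp Fut by simp
    moreover have "r^2 * F c u v \<ge> 0" using Fuv by simp
    ultimately have False using eq False by linarith
    thus ?thesis ..
  qed
qed
lemma F_affine_y: "F c s y = (1-s) - (1 - s + c*s)*y" unfolding F_def by (simp add: algebra_simps)
lemma F_affine_x: "F c x t = (1-t) - (1 - t + c*t)*x" unfolding F_def by (simp add: algebra_simps)

lemma F_avg_y:
  assumes "finite J'" "J' \<noteq> {}"
  shows "F c s (sum y J' / card J') = (\<Sum>l\<in>J'. F c s (y l)) / card J'"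
proof -
  have cp: "real (card J') > 0" using assms by (simp add: card_gt_0_iff)
  have "(\<Sum>l\<in>J'. F c s (y l)) = card J' * (1-s) - (1 - s + c*s) * sum y J'"
    by (simp add: F_affine_y sum_subtractf sum_distrib_left)
  thus ?thesis using cp by (simp add: F_affine_y field_simps)
qed

lemma F_avg_x:
  assumes "finite J'" "J' \<noteq> {}"
  shows "F c (sum x J' / card J') t = (\<Sum>l\<in>J'. F c (x l) t) / card J'"
proof -
  have cp: "real (card J') > 0" using assms by (simp add: card_gt_0_iff)
  have "(\<Sum>l\<in>J'. F c (x l) t) = card J' * (1-t) - (1 - t + c*t) * sum x J'"
    by (simp add: F_affine_x sum_subtractf sum_distrib_left)
  thus ?thesis using cp by (simp add: F_affine_x field_simps)
qed

lemma avg_eq_max: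
  fixes x :: "'a \<Rightarrow> real" and M :: real
  assumes "finite J" "\<forall>j\<in>J. x j \<le> M" "sum x J = real (card J) * M"
  shows "\<forall>j\<in>J. x j = M"
proof -
  have "(\<Sum>j\<in>J. M - x j) = 0" using assms(3) by (simp add: sum_subtractf)
  hence "\<forall>j\<in>J. M - x j = 0" using sum_nonneg_eq_0_iff[OF assms(1), of "\<lambda>j. M - x j"] assms(2) by simp
  thus ?thesis by simp
qed

lemma avg_lemma:
  fixes J :: "'a set" and x y :: "'a \<Rightarrow> real" and m :: real
  defines "c \<equiv> m*m"
  assumes fin: "finite J" and m: "m \<ge> 1" and card: "real (card J) \<ge> m + 1"
    and xr: "\<forall>j\<in>J. 0 \<le> x j \<and> x j \<le> 1" and yr: "\<forall>j\<in>J. 0 \<le> y j \<and> y j \<le> 1"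
    and cross: "\<forall>j\<in>J. \<forall>l\<in>J. j \<noteq> l \<longrightarrow> F c (x j) (y l) \<ge> 0"
  defines "X \<equiv> sum x J / card J" and "Y \<equiv> sum y J / card J"
  shows "F c X Y \<ge> 0"
    and "m \<ge> 2 \<Longrightarrow> F c X Y = 0 \<Longrightarrow> (\<forall>j\<in>J. x j = X \<and> y j = Y) \<or>
          (real (card J) = m + 1 \<and> (\<exists>j1\<in>J. x j1 = 1 \<and> y j1 = 1 \<and> (\<forall>j\<in>J-{j1}. x j = 0 \<and> y j = 0)))"
proof -
  have c1: "c \<ge> 1" unfolding c_def using m by (metis mult_mono' mult_1 order_trans zero_le_one)
  have Jne: "J \<noteq> {}" using card m by auto
  have cp: "real (card J) > 0" using fin Jne by (simp add: card_gt_0_iff)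
  have Xr: "0 \<le> X" "X \<le> 1" unfolding X_def using xr cp sum_nonneg[of J x] sum_mono[of J x "\<lambda>_. 1"]
    by (auto simp: field_simps)
  have Yr: "0 \<le> Y" "Y \<le> 1" unfolding Y_def using yr cp sum_nonneg[of J y] sum_mono[of J y "\<lambda>_. 1"]
    by (auto simp: field_simps)
  have "Max (x ` J) \<in> x ` J" using fin Jne by simp
  then obtain j1 where j10: "j1 \<in> J" "x j1 = Max (x ` J)" by auto
  have j1: "j1 \<in> J" "\<forall>j\<in>J. x j \<le> x j1" using j10 fin by auto
  have "Max (y ` J) \<in> y ` J" using fin Jne by simp
  then obtain l1 where l10: "l1 \<in> J" "y l1 = Max (y ` J)" by auto
  have l1: "l1 \<in> J" "\<forall>j\<in>J. y j \<le> y l1" using l10 fin by auto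
  have XM: "X \<le> x j1" unfolding X_def using j1 cp sum_mono[of J x "\<lambda>_. x j1"] by (simp add: field_simps)
  have YM: "Y \<le> y l1" unfolding Y_def using l1 cp sum_mono[of J y "\<lambda>_. y l1"] by (simp add: field_simps)
  have res: "F c X Y \<ge> 0 \<and> (m \<ge> 2 \<longrightarrow> F c X Y = 0 \<longrightarrow> (\<forall>j\<in>J. x j = X \<and> y j = Y) \<or>
          (real (card J) = m + 1 \<and> (\<exists>j1\<in>J. x j1 = 1 \<and> y j1 = 1 \<and> (\<forall>j\<in>J-{j1}. x j = 0 \<and> y j = 0))))"
  proof (cases "\<exists>l\<in>J. l \<noteq> j1 \<and> y l = y l1")
    case True
    then obtain l where l: "l \<in> J" "l \<noteq> j1" "y l = y l1" by blast
    have YM': "Y \<le> y l" using YM l by simp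
    have a1: "F c (x j1) Y \<le> F c X Y" using F_mono_x[OF c1 Yr(1) XM] .
    have a2: "F c (x j1) (y l) \<le> F c (x j1) Y" using F_mono_y[OF c1 _ YM'] xr j1 by auto
    have a3: "F c (x j1) (y l) \<ge> 0" using cross[rule_format, OF j1(1) l(1)] l(2) by blast
    show ?thesis
    proof (intro conjI impI)
      show "F c X Y \<ge> 0" using a1 a2 a3 by linarith
      assume "F c X Y = 0"
      hence e1: "F c X Y - F c (x j1) Y = 0" "F c (x j1) Y - F c (x j1) (y l) = 0" using a1 a2 a3 by linarith+
      have d1: "1 + (c-1)*Y \<ge> 1" using D_pos[OF c1 Yr(1)] .
      have d2: "1 + (c-1)*x j1 \<ge> 1" using D_pos[OF c1] xr j1 by auto
      have "x j1 = X" using e1(1) F_x[of c X Y "x j1"] d1 by simp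
      hence sx: "sum x J = real (card J) * x j1" unfolding X_def using cp by (simp add: field_simps)
      have "\<forall>j\<in>J. x j = x j1" using avg_eq_max[OF fin j1(2) sx] .
      hence ax: "\<forall>j\<in>J. x j = X" using \<open>x j1 = X\<close> by simp
      have "y l = Y" using e1(2) F_y[of c "x j1" Y "y l"] d2 by simp
      hence sy: "sum y J = real (card J) * y l" unfolding Y_def using cp by (simp add: field_simps)
      have yb: "\<forall>j\<in>J. y j \<le> y l" using l1(2) l(3) by simp
      have "\<forall>j\<in>J. y j = y l" using avg_eq_max[OF fin yb sy] .
      hence ay: "\<forall>j\<in>J. y j = Y" using \<open>y l = Y\<close> by simp
      show "(\<forall>j\<in>J. x j = X \<and> y j = Y) \<or>
          (real (card J) = m + 1 \<and> (\<exists>j1\<in>J. x j1 = 1 \<and> y j1 = 1 \<and> (\<forall>j\<in>J-{j1}. x j = 0 \<and> y j = 0)))" using ax ay by simp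
    qed
  next
    case False
    hence lj: "l1 = j1" using l1 by auto
    have ylt: "\<forall>l\<in>J-{j1}. y l < y j1" using False l1 lj by force
    define J' where "J' = J - {j1}"
    define r where "r = real (card J')"
    have finJ': "finite J'" unfolding J'_def using fin by simp
    have cJ: "card J = Suc (card J')" unfolding J'_def using card_Suc_Diff1[OF fin j1(1)] by simp
    have rm: "r \<ge> m" unfolding r_def using card cJ by simp
    have rp: "r > 0" using rm m by simp
    have J'ne: "J' \<noteq> {}" using rp unfolding r_def by auto
    define s where "s = x j1"
    define t where "t = y j1"
    define u where "u = sum x J' / r"
    define v where "v = sum y J' / r"
    have sr: "0 \<le> s" "s \<le> 1" "0 \<le> t" "t \<le> 1" unfolding s_def t_def using xr yr j1 by auto
    have ur: "0 \<le> u" "u \<le> s" unfolding u_def using rp sum_nonneg[of J' x] sum_mono[of J' x "\<lambda>_. s"] xr j1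
      unfolding r_def J'_def s_def by (auto simp: field_simps)
    have vr: "0 \<le> v" "v < t" unfolding v_def using rp sum_nonneg[of J' y] 
      sum_strict_mono[OF finJ' J'ne, of y "\<lambda>_. t"] yr ylt
      unfolding r_def J'_def t_def by (auto simp: field_simps)
    have Fsv: "F c s v \<ge> 0"
    proof -
      have "F c s v = (\<Sum>l\<in>J'. F c s (y l)) / r" unfolding v_def r_def using F_avg_y[OF finJ' J'ne] .
      moreover have "(\<Sum>l\<in>J'. F c s (y l)) \<ge> 0" using cross j1 unfolding J'_def s_def
        by (intro sum_nonneg) auto
      ultimately show ?thesis using rp by simp
    qed
    have Fut: "F c u t \<ge> 0"
    proof -
      have "F c u t = (\<Sum>l\<in>J'. F c (x l) t) / r" unfolding u_def r_def using F_avg_x[OF finJ' J'ne] .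
      moreover have "(\<Sum>l\<in>J'. F c (x l) t) \<ge> 0" using cross j1 unfolding J'_def t_def
        by (intro sum_nonneg) auto
      ultimately show ?thesis using rp by simp
    qed
    have sx: "sum x J = s + r*u" unfolding s_def u_def J'_def using rp sum.remove[OF fin j1(1), of x]
      by (simp add: J'_def r_def)
    have sy: "sum y J = t + r*v" unfolding t_def v_def J'_def using rp sum.remove[OF fin j1(1), of y]
      by (simp add: J'_def r_def)
    have q: "real (card J) = r + 1" using cJ r_def by simp
    have XY: "X = (s + r*u)/(r+1)" "Y = (t+r*v)/(r+1)" unfolding X_def Y_def sx sy q by auto
    have hX: "(r+1)*X = s + r*u" "(r+1)*Y = t + r*v" unfolding XY using rp by simp_all
    have "(r+1)^2 * F c X Y = ((r+1) - (r+1)*X)*((r+1)-(r+1)*Y) - c*((r+1)*X)*((r+1)*Y)"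
      unfolding F_def by (simp add: algebra_simps power2_eq_square)
    also have "\<dots> = F c s t + r*(F c s v + F c u t) + r^2 * F c u v"
      unfolding hX F_def by (simp add: algebra_simps power2_eq_square)
    finally have iden: "(r+1)^2 * F c X Y = F c s t + r*(F c s v + F c u t) + r^2 * F c u v" .
    have urr: "u \<le> 1" using ur sr by simp
    have vrr: "v \<le> 1" using vr sr by simp
    note co = core[OF m rm sr(1,2,3,4) ur(1) urr vr(1) vrr ur(2), folded c_def, OF Fsv Fut]
    have rq: "(r+1)^2 > 0" using rp by simp
    show ?thesis
    proof (intro conjI impI)
      show "F c X Y \<ge> 0" using co(1) iden rq by (metis zero_le_mult_iff not_less)
      assume m2: "m \<ge> 2" and "F c X Y = 0"
      hence "F c s t + r*(F c s v + F c u t) + r^2 * F c u v = 0" using iden by simp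
      from co(2)[OF m2 vr(2) this] have h: "s = 1 \<and> t = 1 \<and> u = 0 \<and> v = 0 \<and> r = m" .
      have "sum x J' = 0" "sum y J' = 0" using h rp unfolding u_def v_def by auto
      hence "\<forall>j\<in>J'. x j = 0" "\<forall>j\<in>J'. y j = 0"
        using sum_nonneg_eq_0_iff[OF finJ', of x] sum_nonneg_eq_0_iff[OF finJ', of y] xr yr
        unfolding J'_def by auto
      thus "(\<forall>j\<in>J. x j = X \<and> y j = Y) \<or>
          (real (card J) = m + 1 \<and> (\<exists>j1\<in>J. x j1 = 1 \<and> y j1 = 1 \<and> (\<forall>j\<in>J-{j1}. x j = 0 \<and> y j = 0)))"
        using h q j1 unfolding s_def t_def J'_def by auto
    qed
  qed
  thus "F c X Y \<ge> 0" by simp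
  show "m \<ge> 2 \<Longrightarrow> F c X Y = 0 \<Longrightarrow> (\<forall>j\<in>J. x j = X \<and> y j = Y) \<or>
          (real (card J) = m + 1 \<and> (\<exists>j1\<in>J. x j1 = 1 \<and> y j1 = 1 \<and> (\<forall>j\<in>J-{j1}. x j = 0 \<and> y j = 0)))"
    using res by blast
qed

lemma finite_Sp: "finite (Sp n p)" by (simp add: Sp_def finite_PiE)
lemma card_Sp: "card (Sp n p) = (\<Prod>i\<in>{1..n}. p i)" unfolding Sp_def by (simp add: card_PiE)
lemma card_Sp_Suc: "card (Sp (Suc n) p) = card (Sp n p) * p (Suc n)"
  unfolding card_Sp by (simp add: prod.nat_ivl_Suc')

lemma Sp_restrict: "x \<in> Sp (Suc n) p \<Longrightarrow> restrict x {1..n} \<in> Sp n p"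
  unfolding Sp_def by (auto simp: PiE_iff)
lemma Sp_last: "x \<in> Sp (Suc n) p \<Longrightarrow> x (Suc n) \<in> {1..p (Suc n)}"
  unfolding Sp_def by (auto simp: PiE_iff)
lemma Sp_inj:
  assumes "x \<in> Sp (Suc n) p" "y \<in> Sp (Suc n) p" "restrict x {1..n} = restrict y {1..n}" "x (Suc n) = y (Suc n)"
  shows "x = y"
proof
  fix i
  show "x i = y i"
  proof (cases "i \<in> {1..n}")
    case True then show ?thesis using assms(3) by (metis restrict_apply')
  next
    case False
    show ?thesis
    proof (cases "i = Suc n")
      case True then show ?thesis using assms(4) by simp
    next
      case False
      hence "i \<notin> {1..Suc n}" using \<open>i \<notin> {1..n}\<close> by auto
      thus ?thesis using assms(1,2) unfolding Sp_def by (simp add: PiE_def extensional_def)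
    qed
  qed
qed

definition slice :: "nat \<Rightarrow> (nat \<Rightarrow> nat) set \<Rightarrow> nat \<Rightarrow> (nat \<Rightarrow> nat) set" where
  "slice n A j = (\<lambda>x. restrict x {1..n}) ` {x\<in>A. x (Suc n) = j}"

lemma slice_sub: "A \<subseteq> Sp (Suc n) p \<Longrightarrow> slice n A j \<subseteq> Sp n p"
  unfolding slice_def using Sp_restrict by blast

lemma mem_slice: "x \<in> A \<Longrightarrow> restrict x {1..n} \<in> slice n A (x (Suc n))"
  unfolding slice_def by auto

lemma recon: "A \<subseteq> Sp (Suc n) p \<Longrightarrow> x \<in> Sp (Suc n) p \<Longrightarrow> restrict x {1..n} \<in> slice n A (x (Suc n)) \<Longrightarrow> x \<in> A"
proof -
  assume A: "A \<subseteq> Sp (Suc n) p" and x: "x \<in> Sp (Suc n) p" and r: "restrict x {1..n} \<in> slice n A (x (Suc n))"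
  then obtain a where a: "a \<in> A" "a (Suc n) = x (Suc n)" "restrict a {1..n} = restrict x {1..n}"
    unfolding slice_def by auto
  have "a = x" using Sp_inj[of a n p x] a A x by blast
  thus "x \<in> A" using a by simp
qed

lemma card_slice: "A \<subseteq> Sp (Suc n) p \<Longrightarrow> card (slice n A j) = card {x\<in>A. x (Suc n) = j}"
  unfolding slice_def
proof (rule card_image, rule inj_onI)
  fix x y assume A: "A \<subseteq> Sp (Suc n) p" and "x \<in> {x \<in> A. x (Suc n) = j}" "y \<in> {x \<in> A. x (Suc n) = j}"
    and e: "restrict x {1..n} = restrict y {1..n}"
  hence "x \<in> Sp (Suc n) p" "y \<in> Sp (Suc n) p" "x (Suc n) = y (Suc n)" by auto
  thus "x = y" using Sp_inj e by blast
qed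

lemma card_sum:
  assumes "A \<subseteq> Sp (Suc n) p"
  shows "card A = (\<Sum>j\<in>{1..p (Suc n)}. card {x\<in>A. x (Suc n) = j})"
proof -
  have "A = (\<Union>j\<in>{1..p (Suc n)}. {x\<in>A. x (Suc n) = j})"
  proof
    show "A \<subseteq> (\<Union>j\<in>{1..p (Suc n)}. {x\<in>A. x (Suc n) = j})"
    proof
      fix x assume "x \<in> A"
      hence "x (Suc n) \<in> {1..p (Suc n)}" using assms Sp_last by blast
      thus "x \<in> (\<Union>j\<in>{1..p (Suc n)}. {x\<in>A. x (Suc n) = j})" using \<open>x \<in> A\<close> by blast
    qed
  qed blast
  moreover have fA: "finite A" using assms finite_Sp finite_subset by blast
  moreover have "card (\<Union>j\<in>{1..p (Suc n)}. {x\<in>A. x (Suc n) = j}) = (\<Sum>j\<in>{1..p (Suc n)}. card {x\<in>A. x (Suc n) = j})"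
    by (rule card_UN_disjoint) (use fA in auto)
  ultimately show ?thesis by simp
qed

lemma agree_restrict:
  assumes "x (Suc n) \<noteq> y (Suc n)"
  shows "{i\<in>{1..Suc n}. x i = y i} = {i\<in>{1..n}. restrict x {1..n} i = restrict y {1..n} i}"
proof (rule set_eqI)
  fix i
  show "i \<in> {i\<in>{1..Suc n}. x i = y i} \<longleftrightarrow> i \<in> {i\<in>{1..n}. restrict x {1..n} i = restrict y {1..n} i}"
  proof (cases "i \<le> n")
    case True then show ?thesis by simp
  next
    case False
    hence "i \<notin> {1..n}" by simp
    moreover have "i \<in> {1..Suc n} \<Longrightarrow> i = Suc n" using False by simp
    ultimately show ?thesis using assms by auto
  qed
qed

lemma cross_slice:
  assumes "cross_intersecting (Suc n) A B" "j \<noteq> l"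
  shows "cross_intersecting n (slice n A j) (slice n B l)"
  unfolding r_cross_intersecting_def r_intersecting_def
proof (intro ballI)
  fix a b assume "a \<in> slice n A j" "b \<in> slice n B l"
  then obtain x y where xy: "x \<in> A" "y \<in> B" "x (Suc n) = j" "y (Suc n) = l"
    "a = restrict x {1..n}" "b = restrict y {1..n}" unfolding slice_def by auto
  have "1 \<le> card {i\<in>{1..Suc n}. x i = y i}" using assms(1) xy(1,2)
    unfolding r_cross_intersecting_def r_intersecting_def by blast
  moreover have "x (Suc n) \<noteq> y (Suc n)" using xy(3,4) assms(2) by simp
  hence "{i\<in>{1..Suc n}. x i = y i} = {i\<in>{1..n}. a i = b i}" unfolding xy(5,6) by (rule agree_restrict)
  ultimately show "1 \<le> card {i\<in>{1..n}. a i = b i}" by simp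
qed


lemma card_Sp_pos: "(\<forall>i\<in>{1..n}. p i > 0) \<Longrightarrow> card (Sp n p) > 0"
  unfolding card_Sp by (simp add: prod_pos)

lemma card_le_Sp: "A \<subseteq> Sp n p \<Longrightarrow> card A \<le> card (Sp n p)"
  using card_mono finite_Sp by blast

lemma Sp0: "card (Sp 0 p) = 1" unfolding card_Sp by simp

lemma cross0: "cross_intersecting 0 A B \<Longrightarrow> A = {} \<or> B = {}"
  unfolding r_cross_intersecting_def r_intersecting_def by auto

lemma slices_real:
  assumes "A \<subseteq> Sp (Suc n) p" "\<forall>i\<in>{1..Suc n}. p i > 0"
  shows "(\<Sum>j\<in>{1..p (Suc n)}. real (card (slice n A j)) / real (card (Sp n p))) / real (card {1..p (Suc n)})
       = real (card A) / real (card (Sp (Suc n) p))"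
proof -
  have "(\<Sum>j\<in>{1..p (Suc n)}. real (card (slice n A j))) = real (card A)"
    using card_sum[OF assms(1)] card_slice[OF assms(1)] by simp
  hence "(\<Sum>j\<in>{1..p (Suc n)}. real (card (slice n A j)) / real (card (Sp n p))) = real (card A) / real (card (Sp n p))"
    by (simp add: sum_divide_distrib[symmetric])
  thus ?thesis by (simp add: card_Sp_Suc)
qed

lemma thmM:
  fixes k :: nat
  assumes k: "k \<ge> 2"
  shows "\<forall>p A B. (\<forall>i\<in>{1..n}. p i \<ge> k) \<longrightarrow> A \<subseteq> Sp n p \<longrightarrow> B \<subseteq> Sp n p \<longrightarrow> cross_intersecting n A B \<longrightarrow>
     F ((real k - 1)*(real k - 1)) (card A / card (Sp n p)) (card B / card (Sp n p)) \<ge> 0"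
proof (induction n)
  case 0
  show ?case
  proof (intro allI impI)
    fix p A B assume A: "A \<subseteq> Sp 0 p" and B: "B \<subseteq> Sp 0 p" and cr: "cross_intersecting 0 A B"
    have "card A \<le> 1" "card B \<le> 1" using card_le_Sp[OF A] card_le_Sp[OF B] Sp0 by auto
    moreover have "A = {} \<or> B = {}" using cross0[OF cr] .
    ultimately show "F ((real k - 1)*(real k - 1)) (card A / card (Sp 0 p)) (card B / card (Sp 0 p)) \<ge> 0"
      unfolding Sp0 F_def by auto
  qed
next
  case (Suc n)
  show ?case
  proof (intro allI impI)
    fix p A B assume pk: "\<forall>i\<in>{1..Suc n}. p i \<ge> k" and A: "A \<subseteq> Sp (Suc n) p" and B: "B \<subseteq> Sp (Suc n) p"
      and cr: "cross_intersecting (Suc n) A B"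
    have pp: "\<forall>i\<in>{1..Suc n}. p i > 0" using pk k by force
    have pk': "\<forall>i\<in>{1..n}. p i \<ge> k" using pk by simp
    have Np: "real (card (Sp n p)) > 0" using card_Sp_pos[of n p] pp by simp
    define x where "x j = real (card (slice n A j)) / real (card (Sp n p))" for j
    define y where "y j = real (card (slice n B j)) / real (card (Sp n p))" for j
    have m: "real k - 1 \<ge> 1" using k by simp
    have cJ: "real (card {1..p (Suc n)}) \<ge> (real k - 1) + 1" using pk by simp
    have xr: "\<forall>j\<in>{1..p (Suc n)}. 0 \<le> x j \<and> x j \<le> 1" unfolding x_def
      using card_le_Sp[OF slice_sub[OF A]] Np by (simp add: field_simps)
    have yr: "\<forall>j\<in>{1..p (Suc n)}. 0 \<le> y j \<and> y j \<le> 1" unfolding y_def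
      using card_le_Sp[OF slice_sub[OF B]] Np by (simp add: field_simps)
    have cross: "\<forall>j\<in>{1..p (Suc n)}. \<forall>l\<in>{1..p (Suc n)}. j \<noteq> l \<longrightarrow> F ((real k - 1)*(real k - 1)) (x j) (y l) \<ge> 0"
    proof (intro ballI impI)
      fix j l :: nat assume "j \<noteq> l"
      show "F ((real k - 1)*(real k - 1)) (x j) (y l) \<ge> 0"
        using mp[OF mp[OF mp[OF mp[OF spec[OF spec[OF spec[OF Suc.IH, of p], of "slice n A j"], of "slice n B l"] pk']
           slice_sub[OF A, of j]] slice_sub[OF B, of l]] cross_slice[OF cr \<open>j \<noteq> l\<close>]]
        unfolding x_def y_def .
    qed
    have "F ((real k - 1)*(real k - 1)) (sum x {1..p (Suc n)} / card {1..p (Suc n)}) (sum y {1..p (Suc n)} / card {1..p (Suc n)}) \<ge> 0"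
      by (rule avg_lemma(1)[OF _ m cJ xr yr cross]) simp
    thus "F ((real k - 1)*(real k - 1)) (card A / card (Sp (Suc n) p)) (card B / card (Sp (Suc n) p)) \<ge> 0"
      unfolding x_def y_def slices_real[OF A pp] slices_real[OF B pp] .
  qed
qed


lemma A_repr: "A \<subseteq> Sp (Suc n) p \<Longrightarrow> A = {x\<in>Sp (Suc n) p. restrict x {1..n} \<in> slice n A (x (Suc n))}"
  using mem_slice recon by blast

lemma frac_eq: "k > 0 \<Longrightarrow> N > 0 \<Longrightarrow> real a / real N = 1 / real k \<longleftrightarrow> a * k = (N::nat)"
proof -
  assume "k > 0" "N > 0"
  hence "real a / real N = 1 / real k \<longleftrightarrow> real a * real k = real N" by (auto simp: field_simps)
  also have "\<dots> \<longleftrightarrow> a * k = N" by (metis of_nat_eq_iff of_nat_mult)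
  finally show ?thesis .
qed

lemma F_k: "k > 0 \<Longrightarrow> F ((real k - 1)*(real k - 1)) (1/real k) (1/real k) = 0"
  unfolding F_def by (simp add: field_simps)

lemma thmU:
  fixes k :: nat
  assumes k: "k \<ge> 3"
  shows "\<forall>p A B. (\<forall>i\<in>{1..n}. p i \<ge> k) \<longrightarrow> A \<subseteq> Sp n p \<longrightarrow> B \<subseteq> Sp n p \<longrightarrow> cross_intersecting n A B \<longrightarrow>
     card A * k = card (Sp n p) \<longrightarrow> card B * k = card (Sp n p) \<longrightarrow>
     (\<exists>i\<in>{1..n}. p i = k \<and> (\<exists>j\<in>{1..k}. A = {x\<in>Sp n p. x i = j} \<and> B = {x\<in>Sp n p. x i = j}))"
proof (induction n)
  case 0
  show ?case using k Sp0 by (metis One_nat_def mult_is_0 nat_1_eq_mult_iff not_numeral_le_zero numeral_le_one_iff semiring_norm(70))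
next
  case (Suc n)
  show ?case
  proof (intro allI impI)
    fix p A B assume pk: "\<forall>i\<in>{1..Suc n}. p i \<ge> k" and A: "A \<subseteq> Sp (Suc n) p" and B: "B \<subseteq> Sp (Suc n) p"
      and cr: "cross_intersecting (Suc n) A B" and cA: "card A * k = card (Sp (Suc n) p)"
      and cB: "card B * k = card (Sp (Suc n) p)"
    have kp: "k > 0" using k by simp
    have pp: "\<forall>i\<in>{1..Suc n}. p i > 0" using pk k by force
    have pk': "\<forall>i\<in>{1..n}. p i \<ge> k" using pk by simp
    have Npn: "card (Sp n p) > 0" using card_Sp_pos[of n p] pp by simp
    have Np: "real (card (Sp n p)) > 0" using Npn by simp
    have NSp: "card (Sp (Suc n) p) > 0" using card_Sp_pos[of "Suc n" p] pp by simp
    define J where "J = {1..p (Suc n)}"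
    define x where "x j = real (card (slice n A j)) / real (card (Sp n p))" for j
    define y where "y j = real (card (slice n B j)) / real (card (Sp n p))" for j
    define c where "c = (real k - 1)*(real k - 1)"
    have m: "real k - 1 \<ge> 1" using k by simp
    have m2: "real k - 1 \<ge> 2" using k by simp
    have cJ: "real (card J) \<ge> (real k - 1) + 1" using pk unfolding J_def by simp
    have xr: "\<forall>j\<in>J. 0 \<le> x j \<and> x j \<le> 1" unfolding x_def
      using card_le_Sp[OF slice_sub[OF A]] Np by (simp add: field_simps)
    have yr: "\<forall>j\<in>J. 0 \<le> y j \<and> y j \<le> 1" unfolding y_def
      using card_le_Sp[OF slice_sub[OF B]] Np by (simp add: field_simps)
    have cross: "\<forall>j\<in>J. \<forall>l\<in>J. j \<noteq> l \<longrightarrow> F c (x j) (y l) \<ge> 0"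
    proof (intro ballI impI)
      fix j l :: nat assume "j \<noteq> l"
      show "F c (x j) (y l) \<ge> 0"
        using mp[OF mp[OF mp[OF mp[OF spec[OF spec[OF spec[OF thmM[of k n], of p], of "slice n A j"], of "slice n B l"] pk']
           slice_sub[OF A, of j]] slice_sub[OF B, of l]] cross_slice[OF cr \<open>j \<noteq> l\<close>]] k
        unfolding x_def y_def c_def by simp
    qed
    have XA: "sum x J / card J = 1 / real k" unfolding x_def J_def slices_real[OF A pp]
      using frac_eq[OF kp NSp] cA by simp
    have YB: "sum y J / card J = 1 / real k" unfolding y_def J_def slices_real[OF B pp]
      using frac_eq[OF kp NSp] cB by simp
    have F0: "F c (sum x J / card J) (sum y J / card J) = 0" unfolding XA YB c_def using F_k[OF kp] .
    have fJ: "finite J" unfolding J_def by simp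
    from avg_lemma(2)[OF fJ m cJ xr yr cross[unfolded c_def], folded c_def, OF m2 F0]
    have disj: "(\<forall>j\<in>J. x j = sum x J / card J \<and> y j = sum y J / card J) \<or>
          (real (card J) = (real k - 1) + 1 \<and> (\<exists>j1\<in>J. x j1 = 1 \<and> y j1 = 1 \<and> (\<forall>j\<in>J-{j1}. x j = 0 \<and> y j = 0)))" .
    show "\<exists>i\<in>{1..Suc n}. p i = k \<and> (\<exists>j\<in>{1..k}. A = {x\<in>Sp (Suc n) p. x i = j} \<and> B = {x\<in>Sp (Suc n) p. x i = j})"
    proof (cases "\<forall>j\<in>J. x j = sum x J / card J \<and> y j = sum y J / card J")
      case True
      have sA: "card (slice n A j) * k = card (Sp n p)" if "j \<in> J" for j
        using True that XA frac_eq[OF kp Npn] unfolding x_def by simp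
      have sB: "card (slice n B j) * k = card (Sp n p)" if "j \<in> J" for j
        using True that YB frac_eq[OF kp Npn] unfolding y_def by simp
      have IH: "\<exists>i\<in>{1..n}. p i = k \<and> (\<exists>jj\<in>{1..k}. slice n A j = {z\<in>Sp n p. z i = jj} \<and> slice n B l = {z\<in>Sp n p. z i = jj})"
        if "j \<in> J" "l \<in> J" "j \<noteq> l" for j l
        using mp[OF mp[OF mp[OF mp[OF mp[OF mp[OF spec[OF spec[OF spec[OF Suc.IH, of p], of "slice n A j"], of "slice n B l"] pk']
           slice_sub[OF A, of j]] slice_sub[OF B, of l]] cross_slice[OF cr \<open>j \<noteq> l\<close>]] sA[OF that(1)]] sB[OF that(2)]] .
      have eqAB: "slice n A j = slice n B l" if "j \<in> J" "l \<in> J" "j \<noteq> l" for j l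
        using IH[OF that] by auto
      have "p (Suc n) \<ge> k" using pk by simp
      hence J123: "1 \<in> J" "2 \<in> J" "3 \<in> J" unfolding J_def using k by auto
      define T where "T = slice n A 1"
      have allA: "slice n A j = T" if "j \<in> J" for j
      proof (cases "j = 1")
        case True then show ?thesis unfolding T_def by simp
      next
        case False
        have "slice n A j = slice n B 1" using eqAB[OF that J123(1) False] .
        also have "\<dots> = slice n A 2" using eqAB[OF J123(2) J123(1)] by simp
        also have "\<dots> = slice n B 3" using eqAB[OF J123(2) J123(3)] by simp
        also have "\<dots> = T" unfolding T_def using eqAB[OF J123(1) J123(3)] by simp
        finally show ?thesis .
      qed
      have allB: "slice n B j = T" if "j \<in> J" for j
      proof (cases "j = 1")
        case True
        have "slice n B 1 = slice n A 2" using eqAB[OF J123(2) J123(1)] by simp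
        then show ?thesis using True allA[OF J123(2)] by simp
      next
        case False
        have "slice n B j = slice n A 1" using eqAB[OF J123(1) that] False by simp
        then show ?thesis unfolding T_def .
      qed
      obtain i jj where ij: "i \<in> {1..n}" "p i = k" "jj \<in> {1..k}" "T = {z\<in>Sp n p. z i = jj}"
        using IH[OF J123(1) J123(2)] unfolding T_def by auto
      have repr: "C = {z\<in>Sp (Suc n) p. z i = jj}" if C: "C \<subseteq> Sp (Suc n) p" and sC: "\<forall>j\<in>J. slice n C j = T" for C
      proof -
        have "C = {z\<in>Sp (Suc n) p. restrict z {1..n} \<in> slice n C (z (Suc n))}" using A_repr[OF C] .
        also have "\<dots> = {z\<in>Sp (Suc n) p. restrict z {1..n} \<in> T}"
          using sC Sp_last unfolding J_def by auto
        also have "\<dots> = {z\<in>Sp (Suc n) p. z i = jj}"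
          using ij Sp_restrict by auto
        finally show ?thesis .
      qed
      have "A = {z\<in>Sp (Suc n) p. z i = jj}" "B = {z\<in>Sp (Suc n) p. z i = jj}"
        using repr[OF A] repr[OF B] allA allB by auto
      moreover have "i \<in> {1..Suc n}" using ij(1) by simp
      ultimately show ?thesis using ij(2,3) by blast
    next
      case False
      with disj have qk: "real (card J) = (real k - 1) + 1" and
        ex: "\<exists>j1\<in>J. x j1 = 1 \<and> y j1 = 1 \<and> (\<forall>j\<in>J-{j1}. x j = 0 \<and> y j = 0)" by auto
      obtain j1 where j1: "j1 \<in> J" "x j1 = 1" "y j1 = 1" "\<forall>j\<in>J-{j1}. x j = 0 \<and> y j = 0" using ex by blast
      have pq: "p (Suc n) = k" using qk unfolding J_def by simp
      have repr: "C = {z\<in>Sp (Suc n) p. z (Suc n) = j1}" if C: "C \<subseteq> Sp (Suc n) p"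
        and s1: "card (slice n C j1) = card (Sp n p)" and s0: "\<forall>j\<in>J-{j1}. card (slice n C j) = 0" for C
      proof -
        have e1: "slice n C j1 = Sp n p" using card_subset_eq[OF finite_Sp slice_sub[OF C] s1] .
        have e0: "slice n C j = {}" if "j \<in> J - {j1}" for j
          using s0 that finite_subset[OF slice_sub[OF C] finite_Sp] by auto
        have "C = {z\<in>Sp (Suc n) p. restrict z {1..n} \<in> slice n C (z (Suc n))}" using A_repr[OF C] .
        also have "\<dots> = {z\<in>Sp (Suc n) p. z (Suc n) = j1}"
        proof (rule Collect_cong, rule conj_cong[OF refl])
          fix z assume z: "z \<in> Sp (Suc n) p"
          have zJ: "z (Suc n) \<in> J" using Sp_last[OF z] unfolding J_def .
          show "restrict z {1..n} \<in> slice n C (z (Suc n)) \<longleftrightarrow> z (Suc n) = j1"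
            using e1 e0 zJ Sp_restrict[OF z] by (cases "z (Suc n) = j1") auto
        qed
        finally show ?thesis .
      qed
      have cAs: "card (slice n A j1) = card (Sp n p)" using j1(2) Np unfolding x_def by (simp add: field_simps)
      have cBs: "card (slice n B j1) = card (Sp n p)" using j1(3) Np unfolding y_def by (simp add: field_simps)
      have cA0: "\<forall>j\<in>J-{j1}. card (slice n A j) = 0" using j1(4) Np unfolding x_def by simp
      have cB0: "\<forall>j\<in>J-{j1}. card (slice n B j) = 0" using j1(4) Np unfolding y_def by simp
      have "A = {z\<in>Sp (Suc n) p. z (Suc n) = j1}" "B = {z\<in>Sp (Suc n) p. z (Suc n) = j1}"
        using repr[OF A cAs cA0] repr[OF B cBs cB0] by auto
      moreover have "j1 \<in> {1..k}" using j1(1) pq unfolding J_def by simp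
      moreover have "Suc n \<in> {1..Suc n}" by simp
      ultimately show ?thesis using pq by blast
    qed
  qed
qed


lemma bound_real:
  fixes x y kk :: real
  assumes kk: "kk \<ge> 2" and x: "0 \<le> x" "x \<le> 1" and y: "0 \<le> y" "y \<le> 1"
    and F: "F ((kk - 1)*(kk - 1)) x y \<ge> 0"
  shows "x * y \<le> 1 / kk^2"
proof (rule ccontr)
  assume "\<not> ?thesis"
  hence big: "x*y > 1/kk^2" by simp
  define g where "g = sqrt (x*y)"
  have xy0: "0 \<le> x*y" by (rule mult_nonneg_nonneg[OF x(1) y(1)])
  have g2: "g*g = x*y" unfolding g_def using real_sqrt_pow2[OF xy0] by (simp add: power2_eq_square)
  have g0: "g \<ge> 0" unfolding g_def using xy0 by simp
  have "(sqrt x - sqrt y)^2 \<ge> 0" by simp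
  hence "x + y - 2 * (sqrt x * sqrt y) \<ge> 0" using x y by (simp add: power2_eq_square algebra_simps)
  hence xy: "x + y \<ge> 2*g" unfolding g_def by (simp add: real_sqrt_mult)
  have "kk*g > 1"
  proof (rule ccontr)
    assume "\<not> kk*g > 1"
    hence "kk*g \<le> 1" by simp
    hence "(kk*g)^2 \<le> 1" using g0 kk by (simp add: power_le_one)
    moreover have "kk^2 * (x*y) = (kk*g)^2" unfolding g2[symmetric] by (simp add: power2_eq_square algebra_simps)
    ultimately have "kk^2 * (x*y) \<le> 1" by simp
    hence "x*y \<le> 1/kk^2" using kk by (simp add: field_simps)
    thus False using big by simp
  qed
  have "0 \<le> F ((kk - 1)*(kk - 1)) x y" using F .
  also have "F ((kk - 1)*(kk - 1)) x y = 1 - (x+y) + (2*kk - kk*kk) * (g*g)" unfolding F_def g2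
    by (simp add: algebra_simps)
  also have "\<dots> \<le> 1 - 2*g + (2*kk - kk*kk) * (g*g)" using xy by simp
  also have "\<dots> = (1 - kk*g) * (1 + (kk-2)*g)" by (simp add: algebra_simps)
  also have "\<dots> < 0"
  proof (rule mult_neg_pos)
    show "1 - kk*g < 0" using \<open>kk*g > 1\<close> by simp
    show "0 < 1 + (kk-2)*g" using kk g0 by (simp add: add_pos_nonneg)
  qed
  finally show False by simp
qed

lemma eq_real:
  fixes x y kk :: real
  assumes kk: "kk > 0" and x: "0 \<le> x" and y: "0 \<le> y"
    and F: "F ((kk - 1)*(kk - 1)) x y \<ge> 0" and e: "x * y = 1 / kk^2"
  shows "x = 1/kk \<and> y = 1/kk"
proof -
  have "x + y \<le> 1 + (1 - (kk-1)*(kk-1)) * (x*y)" using F unfolding F_def by (simp add: algebra_simps)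
  also have "\<dots> = 2/kk" unfolding e using kk by (simp add: field_simps power2_eq_square)
  finally have s: "x + y \<le> 2/kk" .
  have "(x+y)^2 \<le> (2/kk)^2" using s x y by (simp add: power_mono)
  have "(x-y)^2 = (x+y)^2 - 4*(x*y)" by (simp add: power2_eq_square algebra_simps)
  also have "\<dots> \<le> (2/kk)^2 - 4*(x*y)" using \<open>(x+y)^2 \<le> (2/kk)^2\<close> by simp
  also have "\<dots> = 0" unfolding e by (simp add: power_divide)
  finally have "(x - y)^2 \<le> 0" .
  hence xy: "x = y" by simp
  hence "x^2 = (1/kk)^2" using e by (simp add: power2_eq_square power_divide)
  hence "x = 1/kk" using x kk by (simp add: power2_eq_iff_nonneg)
  thus ?thesis using xy by simp
qed

lemma star_card:
  assumes "i \<in> {1..n}" "j \<in> {1..p i}"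
  shows "card {x\<in>Sp n p. x i = j} * p i = card (Sp n p)"
proof -
  have "{x\<in>Sp n p. x i = j} = PiE {1..n} (\<lambda>l. if l = i then {j} else {1..p l})"
  proof (rule set_eqI)
    fix x
    show "x \<in> {x\<in>Sp n p. x i = j} \<longleftrightarrow> x \<in> PiE {1..n} (\<lambda>l. if l = i then {j} else {1..p l})"
    proof
      assume h: "x \<in> {x\<in>Sp n p. x i = j}"
      hence a: "\<forall>l\<in>{1..n}. x l \<in> {1..p l}" "x \<in> extensional {1..n}" "x i = j"
        unfolding Sp_def PiE_iff by auto
      have "\<forall>l\<in>{1..n}. x l \<in> (if l = i then {j} else {1..p l})"
      proof
        fix l assume "l \<in> {1..n}" then show "x l \<in> (if l = i then {j} else {1..p l})"
          using a by (cases "l = i") auto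
      qed
      thus "x \<in> PiE {1..n} (\<lambda>l. if l = i then {j} else {1..p l})" using a(2) unfolding PiE_iff by simp
    next
      assume h: "x \<in> PiE {1..n} (\<lambda>l. if l = i then {j} else {1..p l})"
      hence a: "\<forall>l\<in>{1..n}. x l \<in> (if l = i then {j} else {1..p l})" "x \<in> extensional {1..n}"
        unfolding PiE_iff by auto
      have xi: "x i = j" using bspec[OF a(1) assms(1)] by simp
      have "\<forall>l\<in>{1..n}. x l \<in> {1..p l}"
      proof
        fix l assume l: "l \<in> {1..n}" show "x l \<in> {1..p l}"
        proof (cases "l = i")
          case True then show ?thesis using xi assms(2) by simp
        next
          case False then show ?thesis using bspec[OF a(1) l] by simp
        qed
      qed
      thus "x \<in> {x\<in>Sp n p. x i = j}" using a(2) xi unfolding Sp_def PiE_iff by simp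
    qed
  qed
  hence "card {x\<in>Sp n p. x i = j} = (\<Prod>l\<in>{1..n}. card (if l = i then {j} else {1..p l}))"
    by (simp add: card_PiE)
  also have "\<dots> = (\<Prod>l\<in>{1..n}-{i}. card (if l = i then {j} else {1..p l}))"
    using prod.remove[where A="{1..n}" and x=i and g="\<lambda>l. card (if l = i then {j} else {1..p l})"] assms(1) by simp
  also have "\<dots> = (\<Prod>l\<in>{1..n}-{i}. p l)" by (rule prod.cong) auto
  finally have "card {x\<in>Sp n p. x i = j} * p i = p i * (\<Prod>l\<in>{1..n}-{i}. p l)" by simp
  also have "\<dots> = (\<Prod>l\<in>{1..n}. p l)" using prod.remove[of "{1..n}" i p] assms(1) by simp
  finally show ?thesis unfolding card_Sp .
qed

lemma star_cross:
  assumes "i \<in> {1..n}"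
  shows "cross_intersecting n {x\<in>Sp n p. x i = j} {x\<in>Sp n p. x i = j}"
  unfolding r_cross_intersecting_def r_intersecting_def
proof (intro ballI)
  fix x y assume "x \<in> {x\<in>Sp n p. x i = j}" "y \<in> {x\<in>Sp n p. x i = j}"
  hence "i \<in> {l\<in>{1..n}. x l = y l}" using assms by simp
  hence "{l\<in>{1..n}. x l = y l} \<noteq> {}" by blast
  thus "1 \<le> card {l\<in>{1..n}. x l = y l}" by (simp add: Suc_le_eq card_gt_0_iff)
qed


theorem theorem1:
  fixes n :: nat and p :: "nat \<Rightarrow> nat"
  assumes "n \<ge> 1"
    and "\<forall>i\<in>{1..n}. p i > 0"
  defines "k \<equiv> Min (p ` {1..n})"
  shows "(\<forall>A B. A \<subseteq> Sp n p \<and> B \<subseteq> Sp n p \<and> cross_intersecting n A B \<longrightarrow>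
            real (card A * card B) \<le> real (card (Sp n p))^2 / real k^2)
       \<and> (\<forall>i\<in>{1..n}. p i = k \<longrightarrow> (\<forall>j\<in>{1..k}.
            cross_intersecting n {x \<in> Sp n p. x i = j} {x \<in> Sp n p. x i = j} \<and>
            real (card {x \<in> Sp n p. x i = j} * card {x \<in> Sp n p. x i = j})
              = real (card (Sp n p))^2 / real k^2))
       \<and> (k \<noteq> 2 \<longrightarrow> (\<forall>A B. A \<subseteq> Sp n p \<and> B \<subseteq> Sp n p \<and> cross_intersecting n A B \<and>
            real (card A * card B) = real (card (Sp n p))^2 / real k^2 \<longrightarrow>
            (\<exists>i\<in>{1..n}. p i = k \<and> (\<exists>j\<in>{1..k}.
               A = {x \<in> Sp n p. x i = j} \<and> B = {x \<in> Sp n p. x i = j}))))"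
  proof -
  have finI: "finite {1..n}" and neI: "{1..n} \<noteq> {}" using assms(1) by auto
  have kin: "k \<in> p ` {1..n}" unfolding k_def using finI neI by simp
  have kle: "\<forall>i\<in>{1..n}. k \<le> p i" unfolding k_def using finI by simp
  obtain i0 where i0: "i0 \<in> {1..n}" "p i0 = k" using kin by auto
  have k1: "k \<ge> 1" using i0 assms(2) by force
  have Npos: "card (Sp n p) > 0" using card_Sp_pos assms(2) by blast
  define N where "N = card (Sp n p)"
  have NR: "real N > 0" using Npos unfolding N_def by simp
  have xyR: "real (card A * card B) / real N ^ 2 = (real (card A) / real N) * (real (card B) / real N)" for A B
    by (simp add: power2_eq_square)
  have rng: "0 \<le> real (card A) / real N \<and> real (card A) / real N \<le> 1" if "A \<subseteq> Sp n p" for A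
    using card_le_Sp[OF that] NR unfolding N_def by (simp add: field_simps)
  have P1: "\<forall>A B. A \<subseteq> Sp n p \<and> B \<subseteq> Sp n p \<and> cross_intersecting n A B \<longrightarrow>
            real (card A * card B) \<le> real (card (Sp n p))^2 / real k^2"
  proof (intro allI impI)
    fix A B assume h: "A \<subseteq> Sp n p \<and> B \<subseteq> Sp n p \<and> cross_intersecting n A B"
    show "real (card A * card B) \<le> real (card (Sp n p))^2 / real k^2"
    proof (cases "k = 1")
      case True
      have "card A * card B \<le> N * N" using card_le_Sp h unfolding N_def by (meson mult_le_mono)
      hence "real (card A * card B) \<le> real N ^2" by (simp add: power2_eq_square of_nat_mult[symmetric] del: of_nat_mult)
      thus ?thesis using True unfolding N_def by simp
    next
      case False
      hence k2: "k \<ge> 2" using k1 by simp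
      have F: "F ((real k - 1)*(real k - 1)) (real (card A) / real N) (real (card B) / real N) \<ge> 0"
        using thmM[OF k2, of n] kle h unfolding N_def by blast
      have "(real (card A) / real N) * (real (card B) / real N) \<le> 1 / (real k)^2"
        using bound_real[OF _ _ _ _ _ F] k2 rng h by simp
      hence "real (card A * card B) / real N ^ 2 \<le> 1 / (real k)^2" unfolding xyR[of A B] .
      thus ?thesis using NR unfolding N_def[symmetric] by (simp add: field_simps)
    qed
  qed
  have P2: "\<forall>i\<in>{1..n}. p i = k \<longrightarrow> (\<forall>j\<in>{1..k}.
            cross_intersecting n {x \<in> Sp n p. x i = j} {x \<in> Sp n p. x i = j} \<and>
            real (card {x \<in> Sp n p. x i = j} * card {x \<in> Sp n p. x i = j})
              = real (card (Sp n p))^2 / real k^2)"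
  proof (intro ballI impI conjI)
    fix i j assume i: "i \<in> {1..n}" and pik: "p i = k" and j: "j \<in> {1..k}"
    show "cross_intersecting n {x \<in> Sp n p. x i = j} {x \<in> Sp n p. x i = j}" using star_cross[OF i] .
    have "card {x\<in>Sp n p. x i = j} * k = N" using star_card[OF i, of j p] j pik unfolding N_def by simp
    hence "real (card {x\<in>Sp n p. x i = j}) * real k = real N" by (metis of_nat_mult)
    hence "real (card {x\<in>Sp n p. x i = j}) = real N / real k" using k1 by (simp add: field_simps)
    thus "real (card {x \<in> Sp n p. x i = j} * card {x \<in> Sp n p. x i = j}) = real (card (Sp n p))^2 / real k^2"
      unfolding N_def by (simp add: power2_eq_square)
  qed
  have P3: "k \<noteq> 2 \<longrightarrow> (\<forall>A B. A \<subseteq> Sp n p \<and> B \<subseteq> Sp n p \<and> cross_intersecting n A B \<and>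
            real (card A * card B) = real (card (Sp n p))^2 / real k^2 \<longrightarrow>
            (\<exists>i\<in>{1..n}. p i = k \<and> (\<exists>j\<in>{1..k}.
               A = {x \<in> Sp n p. x i = j} \<and> B = {x \<in> Sp n p. x i = j})))"
  proof (intro impI allI)
    fix A B assume k2: "k \<noteq> 2" and h: "A \<subseteq> Sp n p \<and> B \<subseteq> Sp n p \<and> cross_intersecting n A B \<and>
            real (card A * card B) = real (card (Sp n p))^2 / real k^2"
    show "\<exists>i\<in>{1..n}. p i = k \<and> (\<exists>j\<in>{1..k}. A = {x \<in> Sp n p. x i = j} \<and> B = {x \<in> Sp n p. x i = j})"
    proof (cases "k = 1")
      case True
      have "real (card A * card B) = real (N * N)" using h True unfolding N_def by (simp add: power2_eq_square)
      hence e: "card A * card B = N * N" by (metis of_nat_eq_iff)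
      have aN: "card A \<le> N" "card B \<le> N" using card_le_Sp h unfolding N_def by auto
      have "card A = N"
      proof (rule ccontr)
        assume "card A \<noteq> N" hence "card A < N" using aN by simp
        hence "card A * card B < N * N" using aN(2) Npos unfolding N_def
          by (metis le_less_trans mult_le_mono2 mult_less_cancel2 not_less not_less_zero N_def)
        thus False using e by simp
      qed
      moreover have "card B = N"
      proof (rule ccontr)
        assume "card B \<noteq> N" hence "card B < N" using aN by simp
        hence "card A * card B < N * N" using aN(1) Npos unfolding N_def
          by (metis le_less_trans mult_le_mono1 mult_less_cancel1 not_less not_less_zero N_def)
        thus False using e by simp
      qed
      ultimately have AB: "A = Sp n p" "B = Sp n p" using card_subset_eq[OF finite_Sp] h unfolding N_def by auto
      have one: "x i0 = 1" if "x \<in> Sp n p" for x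
      proof -
        have "x \<in> PiE {1..n} (\<lambda>i. {1..p i})" using that unfolding Sp_def .
        hence "x i0 \<in> {1..p i0}" using i0(1) by (rule PiE_mem)
        thus ?thesis using i0(2) True by simp
      qed
      have "{x \<in> Sp n p. x i0 = 1} = Sp n p" using one by blast
      thus ?thesis using AB i0 True by auto
    next
      case False
      hence k3: "k \<ge> 3" using k1 k2 by simp
      have kk2: "k \<ge> 2" using k3 by simp
      have F: "F ((real k - 1)*(real k - 1)) (real (card A) / real N) (real (card B) / real N) \<ge> 0"
        using thmM[OF kk2, of n] kle h unfolding N_def by blast
      have "real (card A * card B) / real N ^ 2 = 1 / real k ^ 2" using h NR unfolding N_def[symmetric]
        by (simp add: field_simps)
      hence e: "(real (card A) / real N) * (real (card B) / real N) = 1 / (real k)^2" unfolding xyR[of A B] .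
      have "real (card A) / real N = 1 / real k \<and> real (card B) / real N = 1 / real k"
        using eq_real[OF _ _ _ F e] k3 rng h by simp
      hence cA: "card A * k = N" and cB: "card B * k = N" using frac_eq[of k N] k3 Npos unfolding N_def by auto
      show ?thesis using thmU[OF k3, of n] kle h cA cB unfolding N_def by blast
    qed
  qed
  show ?thesis using P1 P2 P3 by blast
qed

end
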